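(* Let $f:\mathbb{R}^n\to\mathbb{R}$ be convex and continuously differentiable, and let $w^*\in\Delta^n$ be a minimizer of $f$ over $\Delta^n$. Let $T>0$ and let $t\mapsto w^t$, $t\in[0,T]$, be continuously differentiable, take values in $\operatorname{int}(\Delta^n)$, start at $w^0=(1/n,\ldots,1/n)$, and satisfy the Cauchy-Simplex gradient flow $$\frac{dw^t}{dt} = -\, w^t\odot\Big(\nabla f(w^t) - \big(w^t\cdot\nabla f(w^t)\big)\mathbb{1}\Big).$$ Then $$f(w^T)-f(w^* )\le \frac{\log(n)}{T}.$$
   Context: $\Delta^n=\{w\in\mathbb{R}^n : \sum_i w_i=1,\ w_i\ge 0\}$ is the probability simplex and $\operatorname{int}(\Delta^n)$ denotes the points of $\Delta^n$ with all coordinates strictly positive. $\odot$ denotes componentwise multiplication and $\mathbb{1}$ the all-ones vector. *)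

theory Defs
  imports "HOL-Analysis.Analysis"
begin

definition prob_simplex :: "(real ^ 'n) set" where
  "prob_simplex = {w. sum (\<lambda>i. w $ i) UNIV = 1 \<and> (\<forall>i. w $ i \<ge> 0)}"

definition prob_simplex_int :: "(real ^ 'n) set" where
  "prob_simplex_int = {w. w \<in> prob_simplex \<and> (\<forall>i. w $ i > 0)}"

definition cs_field :: "(real ^ 'n \<Rightarrow> real ^ 'n) \<Rightarrow> real ^ 'n \<Rightarrow> real ^ 'n" where
  "cs_field g w = (\<chi> i. - (w $ i * (g w $ i - (w \<bullet> g w))))"

end

theory Submission
  imports Defs
begin

lemma comp_deriv:
  fixes w :: "real \<Rightarrow> real ^ 'n"
  assumes "(w has_vector_derivative v) F"
  shows "((\<lambda>t. w t $ i) has_real_derivative v $ i) F"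
proof -
  have "(w has_derivative (\<lambda>h. h *\<^sub>R v)) F"
    using assms by (simp add: has_vector_derivative_def)
  from bounded_linear.has_derivative[OF bounded_linear_vec_nth this]
  have "((\<lambda>t. w t $ i) has_derivative (\<lambda>h. (h *\<^sub>R v) $ i)) F" .
  moreover have "(\<lambda>h. (h *\<^sub>R v) $ i) = (*) (v $ i)" by (auto simp: fun_eq_iff)
  ultimately show ?thesis
    by (simp add: has_field_derivative_def)
qed

lemma tangent:
  fixes f :: "real ^ 'n \<Rightarrow> real"
  assumes cvx: "convex_on UNIV f"
    and d: "(f has_derivative (\<lambda>h. g \<bullet> h)) (at x)"
  shows "f x + g \<bullet> (y - x) \<le> f y"
proof -
  define \<phi> where "\<phi> s = f (x + s *\<^sub>R (y - x))" for s :: real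
  have "convex_on UNIV \<phi>"
  proof (rule convex_onI)
    fix t a b :: real assume t: "t > 0" "t < 1"
    have "x + ((1 - t) *\<^sub>R a + t *\<^sub>R b) *\<^sub>R (y - x)
        = (1 - t) *\<^sub>R (x + a *\<^sub>R (y - x)) + t *\<^sub>R (x + b *\<^sub>R (y - x))"
      by (simp add: algebra_simps)
    then show "\<phi> ((1 - t) *\<^sub>R a + t *\<^sub>R b) \<le> (1 - t) * \<phi> a + t * \<phi> b"
      unfolding \<phi>_def using convex_onD[OF cvx, of t] t by simp
  qed simp
  moreover have "(\<phi> has_field_derivative g \<bullet> (y - x)) (at 0 within UNIV)"
  proof -
    have l: "((\<lambda>s. x + s *\<^sub>R (y - x)) has_derivative (\<lambda>h. h *\<^sub>R (y - x))) (at 0)"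
      by (auto intro!: derivative_eq_intros)
    have "((\<lambda>s. f (x + s *\<^sub>R (y - x))) has_derivative (\<lambda>h. g \<bullet> (h *\<^sub>R (y - x)))) (at 0)"
      using diff_chain_at[OF l, of f "\<lambda>h. g \<bullet> h"] d by (simp add: o_def)
    moreover have "(\<lambda>h. g \<bullet> (h *\<^sub>R (y - x))) = (*) (g \<bullet> (y - x))"
      by (auto simp: fun_eq_iff)
    ultimately show ?thesis unfolding \<phi>_def
      by (simp add: has_field_derivative_def)
  qed
  ultimately have "\<phi> 1 - \<phi> 0 \<ge> g \<bullet> (y - x) * (1 - 0)"
    by (intro convex_on_imp_above_tangent) auto
  then show ?thesis by (simp add: \<phi>_def)
qed

theorem theorem4p3:
  fixes f :: "real ^ 'n \<Rightarrow> real"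
    and grad :: "real ^ 'n \<Rightarrow> real ^ 'n"
    and w :: "real \<Rightarrow> real ^ 'n"
    and wstar :: "real ^ 'n"
    and T :: real
  assumes convex: "convex_on UNIV f"
    and grad: "\<And>x. (f has_derivative (\<lambda>h. grad x \<bullet> h)) (at x)"
    and grad_cont: "continuous_on UNIV grad"
    and wstar_in: "wstar \<in> prob_simplex"
    and wstar_min: "\<And>v. v \<in> prob_simplex \<Longrightarrow> f wstar \<le> f v"
    and T_pos: "T > 0"
    and w_int: "\<And>t. t \<in> {0..T} \<Longrightarrow> w t \<in> prob_simplex_int"
    and w_init: "w 0 = (\<chi> i. 1 / real CARD('n))"
    and w_flow: "\<And>t. t \<in> {0..T} \<Longrightarrow>
                   (w has_vector_derivative cs_field grad (w t)) (at t within {0..T})"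
    and w_C1: "continuous_on {0..T} (\<lambda>t. cs_field grad (w t))"
  shows "f (w T) - f wstar \<le> ln (real CARD('n)) / T"
proof -
  define S where "S = {0..T}"
  define v where "v t = cs_field grad (w t)" for t
  define g where "g t = grad (w t)" for t
  define E where "E t = t * (f (w t) - f wstar) + (\<Sum>i\<in>UNIV. wstar $ i * (- ln (w t $ i)))" for t
  define E' where "E' t = (f (w t) - f wstar) + t * (g t \<bullet> v t)
      + (\<Sum>i\<in>UNIV. wstar $ i * (- (v t $ i / w t $ i)))" for t
  have wpos: "w t $ i > 0" if "t \<in> S" for t i
    using w_int[of t] that by (auto simp: S_def prob_simplex_int_def)
  have wsum: "(\<Sum>i\<in>UNIV. w t $ i) = 1" if "t \<in> S" for t
    using w_int[of t] that by (auto simp: S_def prob_simplex_int_def prob_simplex_def)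
  have wss: "(\<Sum>i\<in>UNIV. wstar $ i) = 1" and wsnn: "\<And>i. wstar $ i \<ge> 0"
    using wstar_in by (auto simp: prob_simplex_def)
  have vi: "v t $ i = - (w t $ i * (g t $ i - (w t \<bullet> g t)))" for t i
    by (simp add: v_def g_def cs_field_def)
  have deriv: "(E has_real_derivative E' t) (at t within S)" if t: "t \<in> S" for t
  proof -
    have wd: "(w has_vector_derivative v t) (at t within S)"
      using w_flow[of t] t by (simp add: S_def v_def)
    have wdf: "(w has_derivative (\<lambda>h. h *\<^sub>R v t)) (at t within S)"
      using wd by (simp add: has_vector_derivative_def)
    have fd: "((\<lambda>s. f (w s)) has_derivative (\<lambda>h. g t \<bullet> (h *\<^sub>R v t))) (at t within S)"
      using diff_chain_within[OF wdf has_derivative_at_withinI[OF grad[of "w t"]]]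
      by (simp add: o_def g_def)
    moreover have "(\<lambda>h. g t \<bullet> (h *\<^sub>R v t)) = (*) (g t \<bullet> v t)"
      by (auto simp: fun_eq_iff)
    ultimately have fd': "((\<lambda>s. f (w s)) has_real_derivative (g t \<bullet> v t)) (at t within S)"
      by (simp add: has_field_derivative_def)
    have cd: "((\<lambda>s. w s $ i) has_real_derivative v t $ i) (at t within S)" for i
      using comp_deriv[OF wd] .
    have ld: "((\<lambda>s. wstar $ i * (- ln (w s $ i))) has_real_derivative
        wstar $ i * (- (v t $ i / w t $ i))) (at t within S)" for i
      using wpos[OF t, of i]
      by (auto intro!: derivative_eq_intros cd simp: field_simps)
    have pd: "((\<lambda>s. s * (f (w s) - f wstar)) has_real_derivative
        1 * (f (w t) - f wstar) + t * (g t \<bullet> v t)) (at t within S)"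
      using DERIV_mult[OF DERIV_ident DERIV_diff[OF fd' DERIV_const[of "f wstar"]]] by (simp add: mult.commute)
    have sd: "((\<lambda>s. \<Sum>i\<in>UNIV. wstar $ i * (- ln (w s $ i))) has_real_derivative
        (\<Sum>i\<in>UNIV. wstar $ i * (- (v t $ i / w t $ i)))) (at t within S)"
      by (rule DERIV_sum) (rule ld)
    show ?thesis unfolding E_def E'_def using DERIV_add[OF pd sd] by simp
  qed
  have nonpos: "E' t \<le> 0" if t: "t \<in> S" for t
  proof -
    let ?s = "w t \<bullet> g t"
    have "g t \<bullet> v t = (\<Sum>i\<in>UNIV. g t $ i * v t $ i)"
      by (simp add: inner_vec_def)
    also have "\<dots> = (\<Sum>i\<in>UNIV. - (w t $ i * (g t $ i - ?s)^2) - ?s * (w t $ i * (g t $ i - ?s)))"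
      by (intro sum.cong) (simp_all add: vi power2_eq_square algebra_simps)
    also have "\<dots> = - (\<Sum>i\<in>UNIV. w t $ i * (g t $ i - ?s)^2)
        - ?s * (\<Sum>i\<in>UNIV. w t $ i * (g t $ i - ?s))"
      by (simp add: sum_subtractf sum_negf sum_distrib_left)
    also have "(\<Sum>i\<in>UNIV. w t $ i * (g t $ i - ?s)) = ?s - (\<Sum>i\<in>UNIV. w t $ i) * ?s"
      by (simp add: right_diff_distrib sum_subtractf inner_vec_def flip: sum_distrib_right)
    also have "\<dots> = 0" using wsum[OF t] by simp
    finally have gv: "g t \<bullet> v t = - (\<Sum>i\<in>UNIV. w t $ i * (g t $ i - ?s)^2)" by simp
    have "(\<Sum>i\<in>UNIV. w t $ i * (g t $ i - ?s)^2) \<ge> 0"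
      using wpos[OF t] by (intro sum_nonneg mult_nonneg_nonneg) (auto intro: less_imp_le)
    with gv have gv0: "t * (g t \<bullet> v t) \<le> 0"
      using t by (auto simp: S_def intro: mult_nonneg_nonpos)
    have "(\<Sum>i\<in>UNIV. wstar $ i * (- (v t $ i / w t $ i)))
        = (\<Sum>i\<in>UNIV. wstar $ i * (g t $ i - ?s))"
      using wpos[OF t] by (intro sum.cong) (auto simp: vi less_imp_neq[symmetric])
    also have "\<dots> = wstar \<bullet> g t - (\<Sum>i\<in>UNIV. wstar $ i) * ?s"
      by (simp add: right_diff_distrib sum_subtractf inner_vec_def flip: sum_distrib_right)
    also have "\<dots> = g t \<bullet> (wstar - w t)"
      using wss by (simp add: inner_diff_right inner_commute)
    finally have ks: "(\<Sum>i\<in>UNIV. wstar $ i * (- (v t $ i / w t $ i))) = g t \<bullet> (wstar - w t)" .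
    have "f (w t) + g t \<bullet> (wstar - w t) \<le> f wstar"
      unfolding g_def by (rule tangent[OF convex grad])
    then show ?thesis unfolding E'_def ks using gv0 by linarith
  qed
  have "E T \<le> E 0"
  proof (rule DERIV_nonpos_imp_decreasing_open[of 0 T E])
    show "0 \<le> T" using T_pos by simp
    fix x assume x: "0 < x" "x < T"
    then have "x \<in> S" by (simp add: S_def)
    moreover have "at x within S = at x" using x by (simp add: S_def at_within_Icc_at)
    ultimately show "\<exists>y. (E has_real_derivative y) (at x) \<and> y \<le> 0"
      using deriv nonpos by metis
  next
    show "continuous_on {0..T} E"
      unfolding continuous_on_eq_continuous_within
      using deriv DERIV_continuous S_def by blast
  qed
  also have "E 0 = ln (real CARD('n))"
    using wss by (simp add: E_def w_init ln_div sum_distrib_right[symmetric] flip: sum_distrib_left)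
  finally have ET: "E T \<le> ln (real CARD('n))" .
  have TS: "T \<in> S" using T_pos by (simp add: S_def)
  have "(\<Sum>i\<in>UNIV. wstar $ i * (- ln (w T $ i))) \<ge> 0"
  proof (intro sum_nonneg mult_nonneg_nonneg wsnn)
    fix i
    have "w T $ i \<le> (\<Sum>j\<in>UNIV. w T $ j)"
      using wpos[OF TS] by (intro member_le_sum) (auto intro: less_imp_le)
    then have "w T $ i \<le> 1" using wsum[OF TS] by simp
    then show "0 \<le> - ln (w T $ i)" using wpos[OF TS, of i] by simp
  qed
  with ET have "T * (f (w T) - f wstar) \<le> ln (real CARD('n))" by (simp add: E_def)
  then show ?thesis using T_pos by (simp add: field_simps)
qed

end
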